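(* Under the standing assumptions, the following hold. (9) $\{M^{(1,2)}\}\subseteq\{C^{-1}B^{(1)}A^{-1}\}$; and $\{M^{(1,2)}\}\supseteq\{C^{-1}B^{(1)}A^{-1}\}\Leftrightarrow\{M^{(1,2)}\}=\{C^{-1}B^{(1)}A^{-1}\}\Leftrightarrow r(B)=m$ or $r(B)=n$. (10) $\{M^{(1,2)}\}=\{C^{-1}B^{(1,2)}A^{-1}\}$. (11) $\{M^{(1,2)}\}\cap\{C^{-1}B^{(1,3)}A^{-1}\}\neq\emptyset$; $\{M^{(1,2)}\}\supseteq\{C^{-1}B^{(1,3)}A^{-1}\}\Leftrightarrow r(B)=m$ or $r(B)=n$; $\{M^{(1,2)}\}\subseteq\{C^{-1}B^{(1,3)}A^{-1}\}\Leftrightarrow B=0$ or $r(B)=m$; $\{M^{(1,2)}\}=\{C^{-1}B^{(1,3)}A^{-1}\}\Leftrightarrow r(B)=m$. (12) $\{M^{(1,2)}\}\cap\{C^{-1}B^{(1,4)}A^{-1}\}\neq\emptyset$; $\{M^{(1,2)}\}\supseteq\{C^{-1}B^{(1,4)}A^{-1}\}\Leftrightarrow r(B)=m$ or $r(B)=n$; $\{M^{(1,2)}\}\subseteq\{C^{-1}B^{(1,4)}A^{-1}\}\Leftrightarrow B=0$ or $r(B)=n$; $\{M^{(1,2)}\}=\{C^{-1}B^{(1,4)}A^{-1}\}\Leftrightarrow r(B)=n$. (13) $\{M^{(1,2)}\}\supseteq\{C^{-1}B^{(1,2,3)}A^{-1}\}$; and $\{M^{(1,2)}\}\subseteq\{C^{-1}B^{(1,2,3)}A^{-1}\}\Leftrightarrow\{M^{(1,2)}\}=\{C^{-1}B^{(1,2,3)}A^{-1}\}\Leftrightarrow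 B=0$ or $r(B)=m$. (14) $\{M^{(1,2)}\}\supseteq\{C^{-1}B^{(1,2,4)}A^{-1}\}$; and $\{M^{(1,2)}\}\subseteq\{C^{-1}B^{(1,2,4)}A^{-1}\}\Leftrightarrow\{M^{(1,2)}\}=\{C^{-1}B^{(1,2,4)}A^{-1}\}\Leftrightarrow B=0$ or $r(B)=n$. (15) $\{M^{(1,2)}\}\cap\{C^{-1}B^{(1,3,4)}A^{-1}\}\neq\emptyset$; $\{M^{(1,2)}\}\supseteq\{C^{-1}B^{(1,3,4)}A^{-1}\}\Leftrightarrow r(B)=m$ or $r(B)=n$; $\{M^{(1,2)}\}\subseteq\{C^{-1}B^{(1,3,4)}A^{-1}\}\Leftrightarrow B=0$ or $r(B)=m=n$; $\{M^{(1,2)}\}=\{C^{-1}B^{(1,3,4)}A^{-1}\}\Leftrightarrow r(B)=m=n$. (16) $C^{-1}B^\dagger A^{-1}\in\{M^{(1,2)}\}$.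
   Context: Standing assumptions: $m,n\ge1$; $A\in\mathbb{C}^{m\times m}$ and $C\in\mathbb{C}^{n\times n}$ are nonsingular; $B\in\mathbb{C}^{m\times n}$; $M=ABC$. For a complex matrix $X$, $X^*$ is its conjugate transpose, $r(X)$ its rank and $\mathscr{R}(X)$ its column space. For $X\in\mathbb{C}^{p\times q}$, a matrix $G\in\mathbb{C}^{q\times p}$ is called an $\{i,\ldots,j\}$-generalized inverse of $X$ (written $X^{(i,\ldots,j)}$) if it satisfies the equations numbered $i,\ldots,j$ among the four Penrose equations (i) $XGX=X$, (ii) $GXG=G$, (iii) $(XG)^*=XG$, (iv) $(GX)^*=GX$; $\{X^{(i,\ldots,j)}\}$ denotes the set of all such $G$. The Moore–Penrose inverse $X^\dagger$ is the unique matrix satisfying all four equations. For a type $(k,\ldots,l)$, $\{C^{-1}B^{(k,\ldots,l)}A^{-1}\}:=\{C^{-1}GA^{-1}: G\in\{B^{(k,\ldots,l)}\}\}$. *)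

theory Defs
  imports "HOL-Analysis.Analysis"
begin

text \<open>Complex m x n matrices are rendered as complex^'n^'m (m = CARD('m) rows,
  n = CARD('n) columns).\<close>

definition cadj :: "complex^'n^'m \<Rightarrow> complex^'m^'n" where
  "cadj X = (\<chi> i j. cnj (X $ j $ i))"

text \<open>The set of all {i,...,j}-generalized inverses of X, where S is the set of
  the indices of the Penrose equations to be satisfied.\<close>
definition ginv :: "nat set \<Rightarrow> complex^'q^'p \<Rightarrow> (complex^'p^'q) set" where
  "ginv S X = {G. (1 \<in> S \<longrightarrow> X ** G ** X = X) \<and>
                  (2 \<in> S \<longrightarrow> G ** X ** G = G) \<and>
                  (3 \<in> S \<longrightarrow> cadj (X ** G) = X ** G) \<and>
                  (4 \<in> S \<longrightarrow> cadj (G ** X) = G ** X)}"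

definition mpinv :: "complex^'q^'p \<Rightarrow> complex^'p^'q" where
  "mpinv X = (THE G. G \<in> ginv {1,2,3,4} X)"

definition tset :: "complex^'m^'m \<Rightarrow> complex^'n^'m \<Rightarrow> complex^'n^'n \<Rightarrow> nat set
                    \<Rightarrow> (complex^'m^'n) set" where
  "tset A B C S = {matrix_inv C ** G ** matrix_inv A | G. G \<in> ginv S B}"

end

theory Submission
  imports Defs
begin


lemma mm_diff_l: "(A::'a::ring_1^'n^'m) ** (B - C) = A ** B - A ** C"
  by (vector matrix_matrix_mult_def sum_subtractf[symmetric] algebra_simps)
lemma mm_diff_r: "((B::'a::ring_1^'n^'m) - C) ** A = B ** A - C ** A"
  by (vector matrix_matrix_mult_def sum_subtractf[symmetric] algebra_simps)
lemma mm_add_r: "((B::'a::ring_1^'n^'m) + C) ** A = B ** A + C ** A"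
  by (vector matrix_matrix_mult_def sum.distrib[symmetric] algebra_simps)
lemma mm_zero_l[simp]: "(0::'a::ring_1^'n^'m) ** A = 0"
  by (simp add: matrix_matrix_mult_def zero_vec_def)
lemma mm_zero_r[simp]: "(A::'a::ring_1^'n^'m) ** 0 = 0"
  by (simp add: matrix_matrix_mult_def zero_vec_def)

lemma cadj_mult: "cadj (X ** Y) = cadj Y ** cadj X"
  by (simp add: cadj_def matrix_matrix_mult_def vec_eq_iff mult.commute)
lemma cadj_cadj[simp]: "cadj (cadj X) = X"
  by (simp add: cadj_def vec_eq_iff)
lemma cadj_add: "cadj (X + Y) = cadj X + cadj Y"
  by (simp add: cadj_def vec_eq_iff)
lemma cadj_diff: "cadj (X - Y) = cadj X - cadj Y"
  by (simp add: cadj_def vec_eq_iff)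
lemma cadj_zero[simp]: "cadj 0 = 0"
  by (simp add: cadj_def vec_eq_iff)
lemma cadj_mat1[simp]: "cadj (mat 1) = mat 1"
  by (simp add: cadj_def vec_eq_iff mat_def)
lemma cadj_eq_iff: "cadj X = cadj Y \<longleftrightarrow> X = Y"
  by (metis cadj_cadj)

lemma inner_cvec: "inner (u::complex^'k) v = Re (\<Sum>i\<in>UNIV. u$i * cnj (v$i))"
  by (simp add: inner_vec_def inner_complex_def)

lemma inner_adj: "inner (B *v x) y = inner x (cadj B *v (y::complex^'m))"
  for B :: "complex^'n^'m"
proof -
  have "(\<Sum>i\<in>UNIV. (B *v x)$i * cnj (y$i)) = (\<Sum>i\<in>UNIV. \<Sum>j\<in>UNIV. B$i$j * x$j * cnj (y$i))"
    by (simp add: matrix_vector_mult_def sum_distrib_right)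
  also have "\<dots> = (\<Sum>j\<in>UNIV. \<Sum>i\<in>UNIV. B$i$j * x$j * cnj (y$i))"
    by (rule sum.swap)
  also have "\<dots> = (\<Sum>j\<in>UNIV. x$j * cnj ((cadj B *v y)$j))"
    by (simp add: matrix_vector_mult_def cadj_def sum_distrib_left mult_ac)
  finally show ?thesis by (simp add: inner_cvec)
qed

lemma adj_mv: "adjoint (\<lambda>x. (B::complex^'n^'m) *v x) = (\<lambda>y. cadj B *v y)"
  by (rule adjoint_unique) (simp add: inner_adj)

lemma range_eq_ker_adj:
  fixes f :: "'a::euclidean_space \<Rightarrow> 'b::euclidean_space"
  assumes "linear f"
  shows "range f = (adjoint f -` {0})\<^sup>\<bottom>"
proof -
  have "adjoint f -` {0} = (range (adjoint (adjoint f)))\<^sup>\<bottom>"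
    by (rule ker_orthogonal_comp_adjoint) (simp add: adjoint_linear assms)
  then have "adjoint f -` {0} = (range f)\<^sup>\<bottom>"
    by (simp add: adjoint_adjoint assms)
  moreover have "subspace (range f)"
    using assms linear_subspace_image subspace_UNIV by blast
  ultimately show ?thesis by (simp add: orthogonal_comp_self)
qed

lemma exists13: "\<exists>P. cadj (B::complex^'n^'m) ** B ** P = cadj B"
proof -
  let ?S = "cadj B ** B"
  have cS: "cadj ?S = ?S" by (simp add: cadj_mult)
  have lin: "linear (\<lambda>x. ?S *v x)" by simp
  have r: "range (\<lambda>x. ?S *v x) = ((\<lambda>x. ?S *v x) -` {0})\<^sup>\<bottom>"
    using range_eq_ker_adj[OF lin] by (simp add: adj_mv cS)
  have ker: "?S *v x = 0 \<Longrightarrow> B *v x = 0" for x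
  proof -
    assume "?S *v x = 0"
    then have "inner x (cadj B *v (B *v x)) = 0" by (simp add: matrix_vector_mul_assoc)
    then have "inner (B *v x) (B *v x) = 0" by (simp add: inner_adj)
    then show ?thesis by simp
  qed
  have sub: "cadj B *v y \<in> range (\<lambda>x. ?S *v x)" for y
    unfolding r orthogonal_comp_def orthogonal_def
  proof safe
    fix x assume "?S *v x = 0"
    then have "B *v x = 0" by (rule ker)
    then show "inner x (cadj B *v y) = 0"
      by (metis inner_adj inner_zero_left)
  qed
  have "\<forall>k. \<exists>x. ?S *v x = cadj B *v axis k 1"
    using sub by (metis rangeE)
  then obtain xf where xf: "\<And>k. ?S *v xf k = cadj B *v axis k 1" by metis
  define P where "P = (\<chi> i k. xf k $ i)"
  have "(?S ** P) $ i $ j = cadj B $ i $ j" for i j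
  proof -
    have "(?S ** P) $ i $ j = (?S *v xf j) $ i"
      by (simp add: matrix_matrix_mult_def matrix_vector_mult_def P_def)
    also have "\<dots> = (cadj B *v axis j 1) $ i" by (simp add: xf)
    also have "\<dots> = cadj B $ i $ j"
      by (simp add: matrix_vector_mult_def axis_def if_distrib cong: if_cong)
    finally show "(?S ** P) $ i $ j = cadj B $ i $ j" .
  qed
  then have "?S ** P = cadj B" by (simp add: vec_eq_iff)
  then show ?thesis by blast
qed

lemma ginv_mem: "G \<in> ginv S X \<longleftrightarrow> (1 \<in> S \<longrightarrow> X ** G ** X = X) \<and>
                  (2 \<in> S \<longrightarrow> G ** X ** G = G) \<and>
                  (3 \<in> S \<longrightarrow> cadj (X ** G) = X ** G) \<and>
                  (4 \<in> S \<longrightarrow> cadj (G ** X) = G ** X)"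
  by (simp add: ginv_def)

lemma ex_g13: "\<exists>G. (B::complex^'n^'m) ** G ** B = B \<and> cadj (B ** G) = B ** G"
proof -
  obtain P where P: "cadj B ** B ** P = cadj B" using exists13 by blast
  have P': "cadj P ** cadj B ** B = B"
    using arg_cong[OF P, of cadj] by (simp add: cadj_mult matrix_mul_assoc)
  have h: "B ** P = cadj P ** cadj B"
  proof -
    have "B ** P = cadj P ** cadj B ** B ** P" by (simp add: P')
    also have "\<dots> = cadj P ** (cadj B ** B ** P)" by (simp add: matrix_mul_assoc)
    also have "\<dots> = cadj P ** cadj B" by (simp add: P)
    finally show ?thesis .
  qed
  have h3: "cadj (B ** P) = B ** P" by (simp add: h cadj_mult)
  have "B ** P ** B = B"
    by (metis P' h h3 cadj_mult)
  with h3 show ?thesis by blast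
qed

lemma ex_g14: "\<exists>G. (B::complex^'n^'m) ** G ** B = B \<and> cadj (G ** B) = G ** B"
proof -
  obtain H where H: "cadj B ** H ** cadj B = cadj B" "cadj (cadj B ** H) = cadj B ** H"
    using ex_g13 by blast
  have "B ** cadj H ** B = B" using arg_cong[OF H(1), of cadj] by (simp add: cadj_mult matrix_mul_assoc)
  moreover have "cadj (cadj H ** B) = cadj H ** B"
    using H(2) by (metis cadj_mult cadj_cadj)
  ultimately show ?thesis by blast
qed

lemma mp_unique:
  assumes "G \<in> ginv {1,2,3,4} B" "H \<in> ginv {1,2,3,4} B"
  shows "G = H"
proof -
  from assms have g: "B ** G ** B = B" "G ** B ** G = G" "cadj (B ** G) = B ** G" "cadj (G ** B) = G ** B"
    and h: "B ** H ** B = B" "H ** B ** H = H" "cadj (B ** H) = B ** H" "cadj (H ** B) = H ** B"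
    by (simp_all add: ginv_mem)
  have hb: "cadj B = cadj B ** cadj H ** cadj B" using arg_cong[OF h(1), of cadj] by (simp add: cadj_mult matrix_mul_assoc)
  have "G = G ** (B ** G)" using g(2) by (simp add: matrix_mul_assoc)
  also have "\<dots> = G ** cadj G ** cadj B" using g(3) by (metis cadj_mult matrix_mul_assoc)
  also have "\<dots> = G ** cadj G ** cadj B ** cadj H ** cadj B" by (metis hb matrix_mul_assoc)
  also have "\<dots> = G ** cadj (B ** G) ** cadj (B ** H)" by (simp add: cadj_mult matrix_mul_assoc)
  also have "\<dots> = G ** B ** G ** B ** H" using g(3) h(3) by (simp add: matrix_mul_assoc)
  also have "\<dots> = G ** B ** H" using g(2) by simp
  finally have 1: "G = G ** B ** H" .
  have gb: "cadj B = cadj B ** cadj G ** cadj B" using arg_cong[OF g(1), of cadj] by (simp add: cadj_mult matrix_mul_assoc)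
  have "H = (H ** B) ** H" using h(2) by (simp add: matrix_mul_assoc)
  also have "\<dots> = cadj B ** cadj H ** H" using h(4) by (metis cadj_mult)
  also have "\<dots> = cadj B ** cadj G ** cadj B ** cadj H ** H" by (metis gb)
  also have "\<dots> = cadj (G ** B) ** cadj (H ** B) ** H" by (simp add: cadj_mult matrix_mul_assoc)
  also have "\<dots> = G ** B ** H ** B ** H" using g(4) h(4) by (simp add: matrix_mul_assoc)
  also have "\<dots> = G ** B ** (H ** B ** H)" by (simp add: matrix_mul_assoc)
  also have "\<dots> = G ** B ** H" using h(2) by simp
  finally have 2: "H = G ** B ** H" .
  from 1 2 show ?thesis by simp
qed

lemma mp_exists: "\<exists>G. G \<in> ginv {1,2,3,4} (B::complex^'n^'m)"
proof -
  obtain G3 where a: "B ** G3 ** B = B" "cadj (B ** G3) = B ** G3" using ex_g13 by blast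
  obtain G1 where b: "B ** G1 ** B = B" "cadj (G1 ** B) = G1 ** B" using ex_g14 by blast
  let ?G = "G1 ** B ** G3"
  have "B ** ?G ** B = B" using a b by (simp add: matrix_mul_assoc)
  moreover have "?G ** B ** ?G = ?G"
  proof -
    have "?G ** B ** ?G = G1 ** (B ** G3 ** B) ** G1 ** B ** G3" by (simp add: matrix_mul_assoc)
    also have "\<dots> = G1 ** (B ** G1 ** B) ** G3" using a by (simp add: matrix_mul_assoc)
    also have "\<dots> = ?G" using b by simp
    finally show ?thesis .
  qed
  moreover have "B ** ?G = B ** G3" using b by (simp add: matrix_mul_assoc)
  moreover have "?G ** B = G1 ** B"
    by (metis a(1) matrix_mul_assoc)
  ultimately have "?G \<in> ginv {1,2,3,4} B" using a b by (simp add: ginv_mem)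
  then show ?thesis by blast
qed

lemma mpinv_mem: "mpinv (B::complex^'n^'m) \<in> ginv {1,2,3,4} B"
  unfolding mpinv_def
  using mp_exists[of B] mp_unique[of _ B] by (metis theI)



lemma rank_left: "rank (B::'a::field^'n^'m) = CARD('n) \<longleftrightarrow> (\<exists>L::'a^'m^'n. L ** B = mat 1)"
  unfolding matrix_left_invertible_span_rows_gen row_rank_def_gen
  by (metis vec.dim_eq_full vec.dimension_def card_cart_basis)

lemma rank_zero: "rank (0::'a::field^'n^'m) = 0"
proof -
  have "rows (0::'a::field^'n^'m) = {0}" by (auto simp: rows_def row_def vec_eq_iff)
  then show ?thesis by (simp add: row_rank_def_gen)
qed

lemma rank_right: "rank (B::'a::field^'n^'m) = CARD('m) \<longleftrightarrow> (\<exists>R::'a^'m^'n. B ** R = mat 1)"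
proof -
  have rows: "rows B = range (\<lambda>i. row i B)" by (auto simp: rows_def)
  have fin: "finite (rows B)" by (simp add: rows)
  show ?thesis
  proof
    assume r: "rank B = CARD('m)"
    have c1: "card (rows B) \<le> CARD('m)" unfolding rows by (rule card_image_le) simp
    have "vec.dim (rows B) \<le> card (rows B)"
      by (rule vec.dim_le_card[OF vec.span_superset fin])
    with r c1 have cd: "card (rows B) = CARD('m)" and dc: "card (rows B) = vec.dim (rows B)"
      by (simp_all add: row_rank_def_gen)
    have inj: "inj (\<lambda>i. row i B)"
      using cd unfolding rows by (simp add: inj_on_iff_eq_card)
    have ind: "vec.independent (rows B)"
      using vec.card_eq_dim[OF order.refl dc fin] vec.span_superset by blast
    show "\<exists>R. B ** R = mat 1"
      unfolding matrix_right_invertible_independent_rows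
    proof (intro allI impI)
      fix c :: "'m \<Rightarrow> 'a" and i
      assume s: "(\<Sum>i\<in>UNIV. c i *s row i B) = 0"
      define d where "d v = c (inv (\<lambda>i. row i B) v)" for v
      have "(\<Sum>v\<in>rows B. d v *s v) = (\<Sum>i\<in>UNIV. d (row i B) *s row i B)"
        unfolding rows by (rule sum.reindex[OF inj, unfolded o_def])
      also have "\<dots> = 0" using s by (simp add: d_def inv_f_f[OF inj])
      finally have "\<forall>v\<in>rows B. d v = 0" using ind vec.independent_explicit by blast
      then have "d (row i B) = 0" by (simp add: rows)
      then show "c i = 0" by (simp add: d_def inv_f_f[OF inj])
    qed
  next
    assume "\<exists>R. B ** R = mat 1"
    then have h: "\<And>c. (\<Sum>i\<in>UNIV. c i *s row i B) = 0 \<Longrightarrow> (\<forall>i. c i = 0)"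
      unfolding matrix_right_invertible_independent_rows by blast
    have inj: "inj (\<lambda>i. row i B)"
    proof (rule injI)
      fix i j assume e: "row i B = row j B"
      show "i = j"
      proof (rule ccontr)
        assume ij: "i \<noteq> j"
        define c where "c k = (if k = i then 1 else if k = j then -1 else (0::'a))" for k
        have "(\<Sum>k\<in>UNIV. c k *s row k B) = (\<Sum>k\<in>UNIV. (if k = i then row i B else 0) - (if k = j then row j B else 0))"
          by (rule sum.cong) (auto simp: c_def ij)
        also have "\<dots> = 0" by (simp add: sum_subtractf e)
        finally have "c i = 0" using h by blast
        then show False by (simp add: c_def)
      qed
    qed
    have ind: "vec.independent (rows B)"
      unfolding vec.independent_explicit
    proof (intro conjI allI impI ballI)
      show "finite (rows B)" by (rule fin)
      fix d v assume s: "(\<Sum>v\<in>rows B. d v *s v) = 0" and v: "v \<in> rows B"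
      have "(\<Sum>i\<in>UNIV. d (row i B) *s row i B) = 0"
        using s unfolding rows by (simp add: sum.reindex[OF inj])
      then have "\<forall>i. d (row i B) = 0" using h[of "\<lambda>i. d (row i B)"] by blast
      with v show "d v = 0" by (auto simp: rows)
    qed
    have "rank B = card (rows B)"
      by (simp add: row_rank_def_gen vec.dim_eq_card_independent[OF ind])
    also have "\<dots> = CARD('m)" unfolding rows by (simp add: card_image[OF inj])
    finally show "rank B = CARD('m)" .
  qed
qed



lemma nz_entry: "(P::'a::zero^'k^'i) \<noteq> 0 \<Longrightarrow> \<exists>i j. P $ i $ j \<noteq> 0"
  by (metis vec_eq_iff zero_index)

lemma exE_PUQ:
  fixes P :: "complex^'k^'i" and Q :: "complex^'l^'j"
  assumes "P \<noteq> 0" "Q \<noteq> 0"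
  shows "\<exists>U::complex^'j^'k. P ** U ** Q \<noteq> 0"
proof -
  obtain i j where p: "P $ i $ j \<noteq> 0" using nz_entry[OF assms(1)] by blast
  obtain k l where q: "Q $ k $ l \<noteq> 0" using nz_entry[OF assms(2)] by blast
  define U where "U = (\<chi> a b. if a = j \<and> b = k then (1::complex) else 0)"
  have pu: "(P ** U) $ i $ b = (if b = k then P $ i $ j else 0)" for b
    by (simp add: matrix_matrix_mult_def U_def if_distrib cong: if_cong)
  have "(P ** U ** Q) $ i $ l = (\<Sum>b\<in>UNIV. (P ** U) $ i $ b * Q $ b $ l)"
    unfolding matrix_matrix_mult_def[of "P ** U" Q] by simp
  also have "\<dots> = P $ i $ j * Q $ k $ l"
    by (simp add: pu if_distrib[of "\<lambda>x. x * _"] cong: if_cong)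
  finally have "(P ** U ** Q) $ i $ l = P $ i $ j * Q $ k $ l" .
  with p q have "(P ** U ** Q) $ i $ l \<noteq> 0" by simp
  then show ?thesis by (metis zero_index)
qed

context
  fixes B :: "complex^'n^'m"
begin

definition "XX = mpinv B"
definition "PP = mat 1 - XX ** B"
definition "QQ = mat 1 - B ** XX"

lemma x1: "B ** XX ** B = B" and x2: "XX ** B ** XX = XX" and x3: "cadj (B ** XX) = B ** XX"
  and x4: "cadj (XX ** B) = XX ** B"
  using mpinv_mem[of B] by (simp_all add: ginv_mem XX_def)

lemma BP: "B ** PP = 0"
  by (simp add: PP_def mm_diff_l matrix_mul_assoc x1)
lemma QB: "QQ ** B = 0"
  by (simp add: QQ_def mm_diff_r x1)
lemma cP: "cadj PP = PP" by (simp add: PP_def cadj_diff x4)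
lemma cQ: "cadj QQ = QQ" by (simp add: QQ_def cadj_diff x3)
lemma PPP: "PP ** PP = PP"
  by (simp add: PP_def mm_diff_l mm_diff_r matrix_mul_assoc)
     (metis x1 matrix_mul_assoc)
lemma QQQ: "QQ ** QQ = QQ"
  by (simp add: QQ_def mm_diff_l mm_diff_r matrix_mul_assoc x1)
lemma Pnz: "rank B \<noteq> CARD('n) \<Longrightarrow> PP \<noteq> 0"
  by (metis PP_def eq_iff_diff_eq_0 rank_left)
lemma Qnz: "rank B \<noteq> CARD('m) \<Longrightarrow> QQ \<noteq> 0"
  by (metis QQ_def eq_iff_diff_eq_0 rank_right)

lemma F2: "rank B = CARD('m) \<or> rank B = CARD('n) \<Longrightarrow> ginv {1} B \<subseteq> ginv {1,2} B"
proof
  fix G assume r: "rank B = CARD('m) \<or> rank B = CARD('n)" and "G \<in> ginv {1} B"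
  then have g: "B ** G ** B = B" by (simp add: ginv_mem)
  from r have "G ** B ** G = G"
  proof
    assume "rank B = CARD('m)"
    then obtain R where R: "B ** R = mat 1" using rank_right by blast
    have "B ** G = B ** G ** (B ** R)" by (simp add: R)
    also have "\<dots> = mat 1" by (metis g R matrix_mul_assoc)
    finally show ?thesis by (simp add: matrix_mul_assoc[symmetric])
  next
    assume "rank B = CARD('n)"
    then obtain L where L: "L ** B = mat 1" using rank_left by blast
    have "G ** B = L ** B ** G ** B" by (simp add: L)
    also have "\<dots> = mat 1" by (metis L g matrix_mul_assoc)
    finally show ?thesis by simp
  qed
  with g show "G \<in> ginv {1,2} B" by (simp add: ginv_mem)
qed

lemma F3:
  assumes "rank B \<noteq> CARD('m)" "rank B \<noteq> CARD('n)"
  shows "\<exists>G\<in>ginv {1,3,4} B. G \<notin> ginv {1,2} B"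
proof -
  obtain U where U: "PP ** U ** QQ \<noteq> 0" using exE_PUQ[OF Pnz[OF assms(2)] Qnz[OF assms(1)]] by blast
  define W where "W = PP ** U ** QQ"
  have BW: "B ** W = 0" by (simp add: W_def matrix_mul_assoc BP)
  have WB: "W ** B = 0" by (simp add: W_def QB flip: matrix_mul_assoc)
  define G where "G = XX + W"
  have BG: "B ** G = B ** XX" by (simp add: G_def matrix_add_ldistrib BW)
  have GB: "G ** B = XX ** B" by (simp add: G_def mm_add_r WB)
  have 1: "B ** G ** B = B" by (simp add: BG x1)
  have "G ** B ** G = XX ** B ** G" by (simp add: GB)
  also have "\<dots> = XX ** B ** XX + XX ** B ** W"
    by (simp add: G_def matrix_add_ldistrib)
  also have "\<dots> = XX" using x2 BW by (simp add: matrix_mul_assoc[symmetric])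
  finally have "G ** B ** G \<noteq> G" using U by (simp add: G_def W_def)
  moreover have "G \<in> ginv {1,3,4} B" using 1 by (simp add: ginv_mem BG GB x3 x4)
  ultimately show ?thesis by (auto simp: ginv_mem)
qed

lemma g12_zero: "B = 0 \<Longrightarrow> G \<in> ginv {1,2} B \<Longrightarrow> G = 0"
  by (simp add: ginv_mem)

lemma F4: "ginv {1,2} B \<subseteq> ginv {1,3} B \<longleftrightarrow> B = 0 \<or> rank B = CARD('m)"
proof
  assume "B = 0 \<or> rank B = CARD('m)"
  then show "ginv {1,2} B \<subseteq> ginv {1,3} B"
  proof
    assume "B = 0" then show ?thesis using g12_zero by (auto simp: ginv_mem)
  next
    assume "rank B = CARD('m)"
    then obtain R where R: "B ** R = mat 1" using rank_right by blast
    show ?thesis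
    proof
      fix G assume "G \<in> ginv {1,2} B"
      then have g: "B ** G ** B = B" by (simp add: ginv_mem)
      have "B ** G = B ** G ** (B ** R)" by (simp add: R)
      also have "\<dots> = mat 1" by (metis g R matrix_mul_assoc)
      finally show "G \<in> ginv {1,3} B" using g by (simp add: ginv_mem)
    qed
  qed
next
  assume sub: "ginv {1,2} B \<subseteq> ginv {1,3} B"
  show "B = 0 \<or> rank B = CARD('m)"
  proof (rule ccontr)
    assume "\<not> ?thesis"
    then have b0: "B \<noteq> 0" and r: "rank B \<noteq> CARD('m)" by auto
    obtain V where V: "B ** V ** QQ \<noteq> 0" using exE_PUQ[OF b0 Qnz[OF r]] by blast
    define D where "D = B ** V ** QQ"
    define G where "G = XX + XX ** D"
    have DB: "D ** B = 0" by (simp add: D_def QB flip: matrix_mul_assoc)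
    have BXD: "B ** XX ** D = D" by (simp add: D_def matrix_mul_assoc x1)
    have GB: "G ** B = XX ** B" by (simp add: G_def mm_add_r DB flip: matrix_mul_assoc)
    have BG: "B ** G = B ** XX + D"
      by (simp add: G_def matrix_add_ldistrib BXD matrix_mul_assoc)
    have 1: "B ** G ** B = B" by (metis GB x1 matrix_mul_assoc)
    have "G ** B ** G = XX ** B ** G" by (simp add: GB)
    also have "\<dots> = XX ** (B ** XX + D)" by (simp add: BG flip: matrix_mul_assoc)
    also have "\<dots> = G" by (simp add: matrix_add_ldistrib G_def x2 matrix_mul_assoc)
    finally have 2: "G ** B ** G = G" .
    have "G \<in> ginv {1,3} B" using sub 1 2 by (auto simp: ginv_mem)
    then have "cadj (B ** XX + D) = B ** XX + D" by (simp add: ginv_mem BG)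
    then have cD: "cadj D = D" by (simp add: cadj_add x3)
    have QD: "QQ ** D = 0" by (simp add: D_def QB matrix_mul_assoc)
    have "cadj D = QQ ** cadj V ** cadj B" by (simp add: D_def cadj_mult cQ matrix_mul_assoc)
    then have "QQ ** cadj D = cadj D" by (simp add: matrix_mul_assoc QQQ)
    then have "D = 0" using cD QD by simp
    with V show False by (simp add: D_def)
  qed
qed

lemma F5: "ginv {1,2} B \<subseteq> ginv {1,4} B \<longleftrightarrow> B = 0 \<or> rank B = CARD('n)"
proof
  assume "B = 0 \<or> rank B = CARD('n)"
  then show "ginv {1,2} B \<subseteq> ginv {1,4} B"
  proof
    assume "B = 0" then show ?thesis using g12_zero by (auto simp: ginv_mem)
  next
    assume "rank B = CARD('n)"
    then obtain L where L: "L ** B = mat 1" using rank_left by blast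
    show ?thesis
    proof
      fix G assume "G \<in> ginv {1,2} B"
      then have g: "B ** G ** B = B" by (simp add: ginv_mem)
      have "G ** B = L ** B ** G ** B" by (simp add: L)
      also have "\<dots> = mat 1" by (metis L g matrix_mul_assoc)
      finally show "G \<in> ginv {1,4} B" using g by (simp add: ginv_mem)
    qed
  qed
next
  assume sub: "ginv {1,2} B \<subseteq> ginv {1,4} B"
  show "B = 0 \<or> rank B = CARD('n)"
  proof (rule ccontr)
    assume "\<not> ?thesis"
    then have b0: "B \<noteq> 0" and r: "rank B \<noteq> CARD('n)" by auto
    obtain V where V: "PP ** V ** B \<noteq> 0" using exE_PUQ[OF Pnz[OF r] b0] by blast
    define D where "D = PP ** V ** B"
    define G where "G = XX + D ** XX"
    have BD: "B ** D = 0" by (simp add: D_def BP matrix_mul_assoc)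
    have DXB: "D ** XX ** B = D" by (metis D_def x1 matrix_mul_assoc)
    have BG: "B ** G = B ** XX" by (simp add: G_def matrix_add_ldistrib BD matrix_mul_assoc)
    have GB: "G ** B = XX ** B + D"
      by (simp add: G_def mm_add_r DXB)
    have 1: "B ** G ** B = B" by (simp add: BG x1)
    have "G ** B ** G = G ** (B ** XX)" by (simp add: BG flip: matrix_mul_assoc)
    also have "\<dots> = XX ** B ** XX + D ** XX ** B ** XX"
      by (simp add: G_def mm_add_r matrix_mul_assoc)
    also have "\<dots> = G" by (simp add: DXB G_def x2)
    finally have 2: "G ** B ** G = G" .
    have "G \<in> ginv {1,4} B" using sub 1 2 by (auto simp: ginv_mem)
    then have "cadj (XX ** B + D) = XX ** B + D" by (simp add: ginv_mem GB)
    then have cD: "cadj D = D" by (simp add: cadj_add x4)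
    have DP: "D ** PP = 0" by (simp add: D_def BP flip: matrix_mul_assoc)
    have "cadj D = cadj B ** cadj V ** PP" by (simp add: D_def cadj_mult cP matrix_mul_assoc)
    then have "cadj D ** PP = cadj D" by (simp add: PPP flip: matrix_mul_assoc)
    then have "D = 0" using cD DP by simp
    with V show False by (simp add: D_def)
  qed
qed

end



lemma ginv_Un: "ginv (S \<union> T) X = ginv S X \<inter> ginv T X"
  by (auto simp: ginv_def)

lemma ginv_anti: "S \<subseteq> T \<Longrightarrow> ginv T X \<subseteq> ginv S X"
  by (auto simp: ginv_def)

lemma mainB:
  fixes B :: "complex^'n^'m"
  defines "g \<equiv> \<lambda>S. ginv S B"
  shows
    "(g {1,2} \<subseteq> g {1} \<and>
      (g {1} \<subseteq> g {1,2} \<longleftrightarrow> g {1,2} = g {1}) \<and>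
      (g {1,2} = g {1} \<longleftrightarrow> rank B = CARD('m) \<or> rank B = CARD('n)))
    \<and>
     (g {1,2} \<inter> g {1,3} \<noteq> {} \<and>
      (g {1,3} \<subseteq> g {1,2} \<longleftrightarrow> rank B = CARD('m) \<or> rank B = CARD('n)) \<and>
      (g {1,2} \<subseteq> g {1,3} \<longleftrightarrow> B = 0 \<or> rank B = CARD('m)) \<and>
      (g {1,2} = g {1,3} \<longleftrightarrow> rank B = CARD('m)))
    \<and>
     (g {1,2} \<inter> g {1,4} \<noteq> {} \<and>
      (g {1,4} \<subseteq> g {1,2} \<longleftrightarrow> rank B = CARD('m) \<or> rank B = CARD('n)) \<and>
      (g {1,2} \<subseteq> g {1,4} \<longleftrightarrow> B = 0 \<or> rank B = CARD('n)) \<and>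
      (g {1,2} = g {1,4} \<longleftrightarrow> rank B = CARD('n)))
    \<and>
     (g {1,2,3} \<subseteq> g {1,2} \<and>
      (g {1,2} \<subseteq> g {1,2,3} \<longleftrightarrow> g {1,2} = g {1,2,3}) \<and>
      (g {1,2} = g {1,2,3} \<longleftrightarrow> B = 0 \<or> rank B = CARD('m)))
    \<and>
     (g {1,2,4} \<subseteq> g {1,2} \<and>
      (g {1,2} \<subseteq> g {1,2,4} \<longleftrightarrow> g {1,2} = g {1,2,4}) \<and>
      (g {1,2} = g {1,2,4} \<longleftrightarrow> B = 0 \<or> rank B = CARD('n)))
    \<and>
     (g {1,2} \<inter> g {1,3,4} \<noteq> {} \<and>
      (g {1,3,4} \<subseteq> g {1,2} \<longleftrightarrow> rank B = CARD('m) \<or> rank B = CARD('n)) \<and>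
      (g {1,2} \<subseteq> g {1,3,4} \<longleftrightarrow>
         B = 0 \<or> (rank B = CARD('m) \<and> CARD('m) = CARD('n))) \<and>
      (g {1,2} = g {1,3,4} \<longleftrightarrow> rank B = CARD('m) \<and> CARD('m) = CARD('n)))"
proof -
  have a1: "g {1,2} \<subseteq> g {1}" "g {1,3} \<subseteq> g {1}" "g {1,4} \<subseteq> g {1}"
    "g {1,3,4} \<subseteq> g {1,3}" "g {1,3,4} \<subseteq> g {1,4}" "g {1,2,3} \<subseteq> g {1,2}" "g {1,2,4} \<subseteq> g {1,2}"
    unfolding g_def by (auto intro!: ginv_anti)
  have u: "g {1,2,3} = g {1,2} \<inter> g {1,3}" "g {1,2,4} = g {1,2} \<inter> g {1,4}"
      "g {1,3,4} = g {1,3} \<inter> g {1,4}"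
    unfolding g_def by (auto simp: ginv_def)
  have mp: "mpinv B \<in> g {1,2}" "mpinv B \<in> g {1,3}" "mpinv B \<in> g {1,4}" "mpinv B \<in> g {1,3,4}"
    using mpinv_mem[of B] unfolding g_def by (auto simp: ginv_mem)
  have f2: "rank B = CARD('m) \<or> rank B = CARD('n) \<Longrightarrow> g {1} \<subseteq> g {1,2}"
    unfolding g_def by (rule F2)
  have f3: "rank B \<noteq> CARD('m) \<Longrightarrow> rank B \<noteq> CARD('n) \<Longrightarrow> \<exists>G\<in>g {1,3,4}. G \<notin> g {1,2}"
    unfolding g_def by (rule F3)
  have f4: "g {1,2} \<subseteq> g {1,3} \<longleftrightarrow> B = 0 \<or> rank B = CARD('m)" unfolding g_def by (rule F4)
  have f5: "g {1,2} \<subseteq> g {1,4} \<longleftrightarrow> B = 0 \<or> rank B = CARD('n)" unfolding g_def by (rule F5)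
  have z: "B = 0 \<Longrightarrow> rank B \<noteq> CARD('m) \<and> rank B \<noteq> CARD('n)"
    by (simp add: rank_zero)
  have c3: "g {1,3} \<subseteq> g {1,2} \<longleftrightarrow> rank B = CARD('m) \<or> rank B = CARD('n)"
    using a1 f2 f3 by blast
  have c4: "g {1,4} \<subseteq> g {1,2} \<longleftrightarrow> rank B = CARD('m) \<or> rank B = CARD('n)"
    using a1 f2 f3 by blast
  have c34: "g {1,3,4} \<subseteq> g {1,2} \<longleftrightarrow> rank B = CARD('m) \<or> rank B = CARD('n)"
    using a1 f2 f3 by blast
  have c1: "g {1,2} = g {1} \<longleftrightarrow> rank B = CARD('m) \<or> rank B = CARD('n)"
    using a1 f2 f3 by blast
  have n1: "g {1,2} \<inter> g {1,3} \<noteq> {}" "g {1,2} \<inter> g {1,4} \<noteq> {}" "g {1,2} \<inter> g {1,3,4} \<noteq> {}"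
    using mp by blast+
  have e3: "g {1,2} = g {1,3} \<longleftrightarrow> rank B = CARD('m)"
    using c3 f4 z by auto
  have e4: "g {1,2} = g {1,4} \<longleftrightarrow> rank B = CARD('n)"
    using c4 f5 z by auto
  have s34: "g {1,2} \<subseteq> g {1,3,4} \<longleftrightarrow> B = 0 \<or> (rank B = CARD('m) \<and> CARD('m) = CARD('n))"
    using f4 f5 u(3) by auto
  have e34: "g {1,2} = g {1,3,4} \<longleftrightarrow> rank B = CARD('m) \<and> CARD('m) = CARD('n)"
    using s34 c34 z by auto
  have e123: "g {1,2} = g {1,2,3} \<longleftrightarrow> B = 0 \<or> rank B = CARD('m)"
    using f4 u(1) by auto
  have e124: "g {1,2} = g {1,2,4} \<longleftrightarrow> B = 0 \<or> rank B = CARD('n)"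
    using f5 u(2) by auto
  have q1: "g {1} \<subseteq> g {1,2} \<longleftrightarrow> g {1,2} = g {1}" using a1 by blast
  have q2: "g {1,2} \<subseteq> g {1,2,3} \<longleftrightarrow> g {1,2} = g {1,2,3}" using a1 by blast
  have q3: "g {1,2} \<subseteq> g {1,2,4} \<longleftrightarrow> g {1,2} = g {1,2,4}" using a1 by blast
  show ?thesis
    using a1 n1 e3 e4 s34 e34 e123 e124 q1 q2 q3 c1 c3 c4 c34 f4 f5 by simp
qed



lemma inv_facts: "invertible A \<Longrightarrow> A ** matrix_inv A = mat 1 \<and> matrix_inv A ** A = mat 1"
  unfolding invertible_def matrix_inv_def by (rule someI_ex)

theorem theorem4p2:
  fixes A :: "complex^'m^'m" and B :: "complex^'n^'m" and C :: "complex^'n^'n"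
    and M :: "complex^'n^'m"
  assumes invA: "invertible A" and invC: "invertible C" and M: "M = A ** B ** C"
  shows
    \<comment> \<open>(9)\<close>
    "(ginv {1,2} M \<subseteq> tset A B C {1} \<and>
      (tset A B C {1} \<subseteq> ginv {1,2} M \<longleftrightarrow> ginv {1,2} M = tset A B C {1}) \<and>
      (ginv {1,2} M = tset A B C {1} \<longleftrightarrow> rank B = CARD('m) \<or> rank B = CARD('n)))
    \<and> \<comment> \<open>(10)\<close>
     ginv {1,2} M = tset A B C {1,2}
    \<and> \<comment> \<open>(11)\<close>
     (ginv {1,2} M \<inter> tset A B C {1,3} \<noteq> {} \<and>
      (tset A B C {1,3} \<subseteq> ginv {1,2} M \<longleftrightarrow> rank B = CARD('m) \<or> rank B = CARD('n)) \<and>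
      (ginv {1,2} M \<subseteq> tset A B C {1,3} \<longleftrightarrow> B = 0 \<or> rank B = CARD('m)) \<and>
      (ginv {1,2} M = tset A B C {1,3} \<longleftrightarrow> rank B = CARD('m)))
    \<and> \<comment> \<open>(12)\<close>
     (ginv {1,2} M \<inter> tset A B C {1,4} \<noteq> {} \<and>
      (tset A B C {1,4} \<subseteq> ginv {1,2} M \<longleftrightarrow> rank B = CARD('m) \<or> rank B = CARD('n)) \<and>
      (ginv {1,2} M \<subseteq> tset A B C {1,4} \<longleftrightarrow> B = 0 \<or> rank B = CARD('n)) \<and>
      (ginv {1,2} M = tset A B C {1,4} \<longleftrightarrow> rank B = CARD('n)))
    \<and> \<comment> \<open>(13)\<close>
     (tset A B C {1,2,3} \<subseteq> ginv {1,2} M \<and>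
      (ginv {1,2} M \<subseteq> tset A B C {1,2,3} \<longleftrightarrow> ginv {1,2} M = tset A B C {1,2,3}) \<and>
      (ginv {1,2} M = tset A B C {1,2,3} \<longleftrightarrow> B = 0 \<or> rank B = CARD('m)))
    \<and> \<comment> \<open>(14)\<close>
     (tset A B C {1,2,4} \<subseteq> ginv {1,2} M \<and>
      (ginv {1,2} M \<subseteq> tset A B C {1,2,4} \<longleftrightarrow> ginv {1,2} M = tset A B C {1,2,4}) \<and>
      (ginv {1,2} M = tset A B C {1,2,4} \<longleftrightarrow> B = 0 \<or> rank B = CARD('n)))
    \<and> \<comment> \<open>(15)\<close>
     (ginv {1,2} M \<inter> tset A B C {1,3,4} \<noteq> {} \<and>
      (tset A B C {1,3,4} \<subseteq> ginv {1,2} M \<longleftrightarrow> rank B = CARD('m) \<or> rank B = CARD('n)) \<and>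
      (ginv {1,2} M \<subseteq> tset A B C {1,3,4} \<longleftrightarrow>
         B = 0 \<or> (rank B = CARD('m) \<and> CARD('m) = CARD('n))) \<and>
      (ginv {1,2} M = tset A B C {1,3,4} \<longleftrightarrow> rank B = CARD('m) \<and> CARD('m) = CARD('n)))
    \<and> \<comment> \<open>(16)\<close>
     matrix_inv C ** mpinv B ** matrix_inv A \<in> ginv {1,2} M"
proof -
  define Ai where "Ai = matrix_inv A"
  define Ci where "Ci = matrix_inv C"
  have a: "A ** Ai = mat 1" "Ai ** A = mat 1" using inv_facts[OF invA] by (simp_all add: Ai_def)
  have c: "C ** Ci = mat 1" "Ci ** C = mat 1" using inv_facts[OF invC] by (simp_all add: Ci_def)
  define f where "f H = Ci ** H ** Ai" for H :: "complex^'m^'n"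
  have bk: "C ** f H ** A = H" for H
  proof -
    have "C ** f H ** A = (C ** Ci) ** H ** (Ai ** A)" by (simp add: f_def matrix_mul_assoc)
    then show ?thesis by (simp add: a c)
  qed
  have inj: "inj f" by (metis bk injI)
  have canc: "X = Y" if "A ** X ** C = A ** Y ** C" for X Y :: "complex^'n^'m"
  proof -
    have "Ai ** (A ** X ** C) ** Ci = Ai ** (A ** Y ** C) ** Ci" using that by simp
    then show ?thesis by (simp add: matrix_mul_assoc a) (simp add: c flip: matrix_mul_assoc)
  qed
  have e1: "M ** f H ** M = A ** (B ** H ** B) ** C" for H
  proof -
    have "M ** f H ** M = A ** B ** (C ** Ci) ** H ** (Ai ** A) ** B ** C"
      by (simp add: M f_def matrix_mul_assoc)
    then show ?thesis by (simp add: a c matrix_mul_assoc)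
  qed
  have e2: "f H ** M ** f H = f (H ** B ** H)" for H
  proof -
    have "f H ** M ** f H = Ci ** H ** (Ai ** A) ** B ** (C ** Ci) ** H ** Ai"
      by (simp add: M f_def matrix_mul_assoc)
    then show ?thesis by (simp add: a c f_def matrix_mul_assoc)
  qed
  have memf: "f H \<in> ginv {1,2} M \<longleftrightarrow> H \<in> ginv {1,2} B" for H
  proof -
    have "M ** f H ** M = M \<longleftrightarrow> A ** (B ** H ** B) ** C = A ** B ** C"
      by (subst e1) (simp only: M)
    also have "\<dots> \<longleftrightarrow> B ** H ** B = B" using canc[of "B ** H ** B" B] by auto
    finally have 1: "M ** f H ** M = M \<longleftrightarrow> B ** H ** B = B" .
    have "f H ** M ** f H = f H \<longleftrightarrow> H ** B ** H = H"
      using inj by (simp add: e2 inj_eq)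
    with 1 show ?thesis by (simp add: ginv_mem)
  qed
  have G12: "ginv {1,2} M = f ` ginv {1,2} B"
  proof
    show "f ` ginv {1,2} B \<subseteq> ginv {1,2} M" using memf by blast
    show "ginv {1,2} M \<subseteq> f ` ginv {1,2} B"
    proof
      fix G assume G: "G \<in> ginv {1,2} M"
      have fG: "f (C ** G ** A) = G"
      proof -
        have "f (C ** G ** A) = (Ci ** C) ** G ** (A ** Ai)" by (simp add: f_def matrix_mul_assoc)
        then show ?thesis by (simp add: a c)
      qed
      then have "C ** G ** A \<in> ginv {1,2} B" using memf[of "C ** G ** A"] G by simp
      with fG show "G \<in> f ` ginv {1,2} B" by (metis imageI)
    qed
  qed
  have T: "tset A B C S = f ` ginv S B" for S
    by (auto simp: tset_def f_def Ai_def Ci_def)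
  have main: "matrix_inv C ** mpinv B ** matrix_inv A \<in> ginv {1,2} M"
    using memf[of "mpinv B"] mpinv_mem[of B] by (simp add: f_def Ai_def Ci_def ginv_mem)
  have sub: "f ` X \<subseteq> f ` Y \<longleftrightarrow> X \<subseteq> Y" for X Y by (rule inj_image_subset_iff[OF inj])
  have eq: "f ` X = f ` Y \<longleftrightarrow> X = Y" for X Y by (rule inj_image_eq_iff[OF inj])
  have int: "f ` X \<inter> f ` Y \<noteq> {} \<longleftrightarrow> X \<inter> Y \<noteq> {}" for X Y
    by (simp add: image_Int[OF inj, symmetric])
  show ?thesis
    unfolding G12 T sub eq int
    using mainB[of B] main G12 by simp
qed


end
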